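(* Let $C^{(n)}$ be a CNOT circuit on $n$ qubits which generates, from a starting label sequence $\ell=(\ell_1,\ldots,\ell_n)$, a set $L^{(n)}$ of labels not containing any of the labels $\ell_1,\ldots,\ell_n$ of the starting sequence. Then $\operatorname{size}(C^{(n)})\geq |L^{(n)}|$ and $D(C^{(n)})\geq |L^{(n)}|/(n/2)$.
   Context: $\mathrm{CX}_{i,j}$ ($i\neq j$) is the CNOT gate with control $i$ and target $j$ on qubits $1,\ldots,n$. A CNOT circuit is a finite sequence of moments $1,\ldots,d$, each a set of CNOT gates acting on pairwise disjoint qubits; $D(C)=d$ is its depth and $\operatorname{size}(C)$ its total number of gates. A label is a subset of $\{1,\ldots,n\}$; $ab$ denotes the symmetric difference of labels $a,b$. A label sequence is acted on from the right: $\ell\,\mathrm{CX}_{i,j}$ replaces $\ell_j$ by $\ell_i\ell_j$; a moment applies its gates, a circuit its moments in order. With $C_{1,m}$ the first $m$ moments, $C$ generates $L$ from $\ell$ if every element of $L$ occurs as an entry of $\ell C_{1,m}$ for some $m\in\{1,\ldots,D(C)\}$. *)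

theory Defs
  imports Complex_Main
begin

(* Qubits are 1..n. A label is a subset of {1..n}; a label sequence is a
   function nat => nat set, of which only indices 1..n are meaningful. *)
type_synonym label = "nat set"
type_synonym labelseq = "nat \<Rightarrow> label"

(* product of labels = symmetric difference *)
definition lmul :: "label \<Rightarrow> label \<Rightarrow> label" where
  "lmul a b = (a - b) \<union> (b - a)"

(* CNOT gate CX_{i,j} represented as the pair (i,j): control i, target j *)
type_synonym gate = "nat \<times> nat"
type_synonym moment = "gate set"
type_synonym circuit = "moment list"

definition qubits_of :: "gate \<Rightarrow> nat set" where
  "qubits_of g = {fst g, snd g}"

definition valid_gate :: "nat \<Rightarrow> gate \<Rightarrow> bool" where
  "valid_gate n g \<longleftrightarrow> fst g \<in> {1..n} \<and> snd g \<in> {1..n} \<and> fst g \<noteq> snd g"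

definition valid_moment :: "nat \<Rightarrow> moment \<Rightarrow> bool" where
  "valid_moment n M \<longleftrightarrow> (\<forall>g\<in>M. valid_gate n g) \<and>
     (\<forall>g\<in>M. \<forall>h\<in>M. g \<noteq> h \<longrightarrow> qubits_of g \<inter> qubits_of h = {})"

definition valid_circuit :: "nat \<Rightarrow> circuit \<Rightarrow> bool" where
  "valid_circuit n C \<longleftrightarrow> (\<forall>M\<in>set C. valid_moment n M)"

definition apply_gate :: "labelseq \<Rightarrow> gate \<Rightarrow> labelseq" where
  "apply_gate l g = l(snd g := lmul (l (fst g)) (l (snd g)))"

definition apply_moment :: "labelseq \<Rightarrow> moment \<Rightarrow> labelseq" where
  "apply_moment l M = (\<lambda>k. if \<exists>i. (i, k) \<in> M
        then lmul (l (THE i. (i, k) \<in> M)) (l k) else l k)"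

definition apply_circuit :: "labelseq \<Rightarrow> circuit \<Rightarrow> labelseq" where
  "apply_circuit l C = foldl apply_moment l C"

definition depth :: "circuit \<Rightarrow> nat" where
  "depth C = length C"

definition circuit_size :: "circuit \<Rightarrow> nat" where
  "circuit_size C = (\<Sum>M\<leftarrow>C. card M)"

definition generates :: "nat \<Rightarrow> circuit \<Rightarrow> labelseq \<Rightarrow> label set \<Rightarrow> bool" where
  "generates n C l L \<longleftrightarrow>
     (\<forall>x\<in>L. \<exists>m\<in>{1..depth C}. \<exists>k\<in>{1..n}. x = apply_circuit l (take m C) k)"

end

theory Submission
  imports Defs
begin

lemma last_gate:
  assumes "m \<le> length C"
  shows "apply_circuit l (take m C) k = l k \<or>
    (\<exists>j<m. \<exists>g\<in>C!j. snd g = k \<and> apply_circuit l (take m C) k = apply_circuit l (take (Suc j) C) k)"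
  using assms
proof (induction m)
  case 0
  then show ?case by (simp add: apply_circuit_def)
next
  case (Suc m)
  have t: "take (Suc m) C = take m C @ [C!m]" using Suc.prems by (simp add: take_Suc_conv_app_nth)
  have e: "apply_circuit l (take (Suc m) C) = apply_moment (apply_circuit l (take m C)) (C!m)"
    unfolding t by (simp add: apply_circuit_def)
  show ?case
  proof (cases "\<exists>i. (i, k) \<in> C!m")
    case True
    then obtain i where "(i,k) \<in> C!m" by blast
    then show ?thesis by (intro disjI2 exI[of _ m]) force
  next
    case False
    then have "apply_circuit l (take (Suc m) C) k = apply_circuit l (take m C) k"
      unfolding e apply_moment_def by simp
    moreover have "apply_circuit l (take m C) k = l k \<or>
    (\<exists>j<m. \<exists>g\<in>C!j. snd g = k \<and> apply_circuit l (take m C) k = apply_circuit l (take (Suc j) C) k)"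
      using Suc by simp
    ultimately show ?thesis using less_SucI by metis
  qed
qed

lemma moment_finite:
  assumes "valid_moment n M" shows "finite M"
proof -
  have "M \<subseteq> {1..n} \<times> {1..n}" using assms unfolding valid_moment_def valid_gate_def by force
  then show ?thesis using finite_subset by blast
qed

lemma moment_card:
  assumes "valid_moment n M" shows "2 * card M \<le> n"
proof -
  have fin: "finite M" using moment_finite assms by blast
  have "card (\<Union>g\<in>M. qubits_of g) = (\<Sum>g\<in>M. card (qubits_of g))"
    by (rule card_UN_disjoint) (use fin assms in \<open>auto simp: valid_moment_def qubits_of_def\<close>)
  also have "\<dots> = (\<Sum>g\<in>M. 2)"
    by (rule sum.cong) (use assms in \<open>auto simp: valid_moment_def valid_gate_def qubits_of_def\<close>)
  finally have "card (\<Union>g\<in>M. qubits_of g) = 2 * card M" by simp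
  moreover have "(\<Union>g\<in>M. qubits_of g) \<subseteq> {1..n}"
    using assms by (auto simp: valid_moment_def valid_gate_def qubits_of_def)
  ultimately show ?thesis by (metis card_atLeastAtMost card_mono diff_Suc_1 finite_atLeastAtMost)
qed

theorem mainTheorem3:
  fixes n :: nat and C :: circuit and l :: labelseq and L :: "label set"
  assumes "valid_circuit n C"
    and "\<forall>k\<in>{1..n}. l k \<subseteq> {1..n}"
    and "\<forall>x\<in>L. x \<subseteq> {1..n}"
    and "generates n C l L"
    and "\<forall>k\<in>{1..n}. l k \<notin> L"
  shows "circuit_size C \<ge> card L \<and> real (depth C) \<ge> real (card L) / (real n / 2)"
proof -
  define G where "G = (\<Union>j<length C. (\<lambda>g. (j, g)) ` (C!j))"
  have vm: "\<And>j. j < length C \<Longrightarrow> valid_moment n (C!j)"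
    using assms(1) by (auto simp: valid_circuit_def)
  have finG: "finite G" unfolding G_def using vm moment_finite by blast
  have "card G = (\<Sum>j<length C. card ((\<lambda>g. (j, g)) ` (C!j)))"
    unfolding G_def
    by (rule card_UN_disjoint) (use vm moment_finite in auto)
  also have "\<dots> = (\<Sum>j<length C. card (C!j))"
    by (rule sum.cong) (auto simp: card_image inj_on_def)
  also have "\<dots> = circuit_size C"
    unfolding circuit_size_def by (simp add: sum_list_sum_nth atLeast0LessThan)
  finally have cG: "card G = circuit_size C" .
  define f where "f = (\<lambda>(j::nat, g::gate). apply_circuit l (take (Suc j) C) (snd g))"
  have "L \<subseteq> f ` G"
  proof
    fix x assume x: "x \<in> L"
    then obtain m k where m: "m \<in> {1..depth C}" and k: "k \<in> {1..n}"
      and xe: "x = apply_circuit l (take m C) k"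
      using assms(4) unfolding generates_def by blast
    have "m \<le> length C" using m by (simp add: depth_def)
    from last_gate[OF this, of l k] show "x \<in> f ` G"
    proof
      assume "apply_circuit l (take m C) k = l k"
      then show ?thesis using x xe k assms(5) by auto
    next
      assume "\<exists>j<m. \<exists>g\<in>C!j. snd g = k \<and> apply_circuit l (take m C) k = apply_circuit l (take (Suc j) C) k"
      then obtain j g where "j < m" "g \<in> C!j" "snd g = k"
        "apply_circuit l (take m C) k = apply_circuit l (take (Suc j) C) k" by blast
      then show ?thesis using xe \<open>m \<le> length C\<close> unfolding f_def G_def by force
    qed
  qed
  then have "card L \<le> card (f ` G)" using finG by (simp add: card_mono)
  also have "\<dots> \<le> card G" using finG by (rule card_image_le)
  finally have s: "card L \<le> circuit_size C" using cG by simp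
  have "2 * circuit_size C = (\<Sum>j<length C. 2 * card (C!j))"
    unfolding circuit_size_def by (simp add: sum_list_sum_nth atLeast0LessThan sum_distrib_left)
  also have "\<dots> \<le> (\<Sum>j<length C. n)"
    by (rule sum_mono) (use vm moment_card in auto)
  finally have "2 * circuit_size C \<le> depth C * n" by (simp add: depth_def)
  then have "2 * card L \<le> depth C * n" using s by linarith
  then have r: "2 * real (card L) \<le> real (depth C) * real n" by (metis of_nat_le_iff of_nat_mult of_nat_numeral)
  have "real (card L) / (real n / 2) \<le> real (depth C)"
  proof (cases "n = 0")
    case True then show ?thesis by simp
  next
    case False then show ?thesis using r by (simp add: divide_le_eq field_simps)
  qed
  then show ?thesis using s by simp
qed

end
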